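(* For all positive integers $n$ and all nonnegative integers $d_1 \le d_2$, we have $\mathsf{maxR}(n,d_1) \le \mathsf{maxR}(n,d_2)$.
   Context: $\mathsf{WR}(f)$ is the Waring rank of a homogeneous $f\in\mathbb{C}[x_1,\dots,x_n]_d$: the smallest $r$ with $f=\sum_{k=1}^r\ell_k^d$ for linear forms $\ell_k$. $\mathsf{maxR}(n,d) = \max\{\mathsf{WR}(f) \mid f \in \mathbb{C}[x_1,\dots,x_n]_d\}$ is the maximum Waring rank of a degree-$d$ form in $n$ variables. *)

theory Defs
  imports Complex_Main "HOL-Library.Extended_Nat"
begin

definition monoms :: "nat \<Rightarrow> nat \<Rightarrow> (nat \<Rightarrow> nat) set" where
  "monoms n d = {\<alpha>. (\<forall>i\<ge>n. \<alpha> i = 0) \<and> (\<Sum>i<n. \<alpha> i) = d}"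

(* Homogeneous forms of degree d in n variables over C, represented by their
   polynomial functions (faithful since C is infinite). Points are x :: nat => complex;
   only the coordinates x 0, ..., x (n-1) matter. *)
definition forms :: "nat \<Rightarrow> nat \<Rightarrow> ((nat \<Rightarrow> complex) \<Rightarrow> complex) set" where
  "forms n d = {F. \<exists>c :: (nat \<Rightarrow> nat) \<Rightarrow> complex.
      \<forall>x. F x = (\<Sum>\<alpha>\<in>monoms n d. c \<alpha> * (\<Prod>i<n. x i ^ \<alpha> i))}"

(* Waring rank: least r with F = sum_{k<r} c_k * l_k^d, l_k linear forms.
   (Scalars c_k are absorbed into l_k when d >= 1 over C; they give the
   standard convention in degree 0.)  Infinity if no decomposition. *)
definition WR :: "nat \<Rightarrow> nat \<Rightarrow> ((nat \<Rightarrow> complex) \<Rightarrow> complex) \<Rightarrow> enat" where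
  "WR n d F = (INF r \<in> {r. \<exists>(c :: nat \<Rightarrow> complex) (a :: nat \<Rightarrow> nat \<Rightarrow> complex).
      \<forall>x. F x = (\<Sum>k<r. c k * (\<Sum>i<n. a k i * x i) ^ d)}. enat r)"

definition maxR :: "nat \<Rightarrow> nat \<Rightarrow> enat" where
  "maxR n d = (SUP F \<in> forms n d. WR n d F)"

end

theory Submission imports Defs "HOL-Library.FuncSet" begin

lemma monoms_finite: "finite (monoms n d)"
proof -
  have "monoms n d \<subseteq> (\<lambda>f i. if i < n then f i else 0) ` ({..<n} \<rightarrow>\<^sub>E {0..d})"
  proof
    fix \<alpha> assume a: "\<alpha> \<in> monoms n d"
    hence z: "\<forall>i\<ge>n. \<alpha> i = 0" and s: "(\<Sum>i<n. \<alpha> i) = d" by (auto simp: monoms_def)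
    have le: "\<alpha> i \<le> d" if "i < n" for i
      using s that member_le_sum[of i "{..<n}" \<alpha>] by auto
    let ?f = "restrict \<alpha> {..<n}"
    have "?f \<in> {..<n} \<rightarrow>\<^sub>E {0..d}" using le by auto
    moreover have "\<alpha> = (\<lambda>i. if i < n then ?f i else 0)" using z by (auto simp: fun_eq_iff)
    ultimately show "\<alpha> \<in> (\<lambda>f i. if i < n then f i else 0) ` ({..<n} \<rightarrow>\<^sub>E {0..d})" by blast
  qed
  moreover have "finite ({..<n} \<rightarrow>\<^sub>E {0..d::nat})" by (intro finite_PiE) auto
  ultimately show ?thesis using finite_subset by blast
qed

lemma sum_split0: "(n::nat) \<ge> 1 \<Longrightarrow> (\<Sum>i<n. f i) = f 0 + (\<Sum>i\<in>{1..<n}. f i)"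
  using sum.atLeast_Suc_lessThan[of 0 n f] by (simp add: atLeast0LessThan)

lemma prod_split0: "(n::nat) \<ge> 1 \<Longrightarrow> (\<Prod>i<n. f i) = f 0 * (\<Prod>i\<in>{1..<n}. f i)"
  using prod.atLeast_Suc_lessThan[of 0 n f] by (simp add: atLeast0LessThan)

definition P :: "nat \<Rightarrow> (nat \<Rightarrow> nat) \<Rightarrow> (nat \<Rightarrow> complex) \<Rightarrow> complex" where
  "P n \<beta> x = (\<Prod>i\<in>{1..<n}. x i ^ \<beta> i)"

lemma P_upd: "P n \<beta> (x(0:=t)) = P n \<beta> x"
  unfolding P_def by (intro prod.cong) auto

lemma P_upd2: "P n (\<beta>(0:=k)) x = P n \<beta> x"
  unfolding P_def by (intro prod.cong) auto

lemma prod_P: "n \<ge> 1 \<Longrightarrow> (\<Prod>i<n. x i ^ \<beta> i) = x 0 ^ \<beta> 0 * P n \<beta> x"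
  unfolding P_def by (rule prod_split0)

lemma antider:
  assumes n: "n \<ge> 1" and f: "f \<in> forms n d"
  shows "\<exists>G \<in> forms n (Suc d). \<forall>x t. ((\<lambda>t. G (x(0:=t))) has_field_derivative f (x(0:=t))) (at t)"
proof -
  obtain c where c: "\<And>x. f x = (\<Sum>\<alpha>\<in>monoms n d. c \<alpha> * (\<Prod>i<n. x i ^ \<alpha> i))"
    using f unfolding forms_def by blast
  define c' where "c' \<beta> = (if \<beta> 0 = 0 then 0 else c (\<beta>(0:=\<beta> 0 - 1)) / of_nat (\<beta> 0))" for \<beta>
  define G where "G x = (\<Sum>\<beta>\<in>monoms n (Suc d). c' \<beta> * (\<Prod>i<n. x i ^ \<beta> i))" for x
  have G: "G \<in> forms n (Suc d)" unfolding forms_def G_def by blast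
  define sh where "sh \<alpha> = \<alpha>(0 := Suc (\<alpha> 0))" for \<alpha> :: "nat \<Rightarrow> nat"
  have inj: "inj_on sh (monoms n d)"
    unfolding sh_def inj_on_def fun_eq_iff by (metis fun_upd_apply nat.inject)
  have img: "sh ` monoms n d = {\<beta>\<in>monoms n (Suc d). \<beta> 0 \<noteq> 0}"
  proof (intro equalityI subsetI)
    fix \<beta> assume "\<beta> \<in> sh ` monoms n d"
    then obtain \<alpha> where a: "\<alpha> \<in> monoms n d" and b: "\<beta> = sh \<alpha>" by blast
    have "(\<Sum>i<n. \<beta> i) = \<beta> 0 + (\<Sum>i\<in>{1..<n}. \<beta> i)" using sum_split0[OF n] .
    also have "(\<Sum>i\<in>{1..<n}. \<beta> i) = (\<Sum>i\<in>{1..<n}. \<alpha> i)" unfolding b sh_def by (intro sum.cong) auto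
    also have "\<beta> 0 = Suc (\<alpha> 0)" unfolding b sh_def by simp
    finally have "(\<Sum>i<n. \<beta> i) = Suc (\<alpha> 0 + (\<Sum>i\<in>{1..<n}. \<alpha> i))" by simp
    also have "\<alpha> 0 + (\<Sum>i\<in>{1..<n}. \<alpha> i) = d" using sum_split0[OF n, of \<alpha>] a by (simp add: monoms_def)
    finally show "\<beta> \<in> {\<beta>\<in>monoms n (Suc d). \<beta> 0 \<noteq> 0}"
      using a n unfolding monoms_def b sh_def by auto
  next
    fix \<beta> assume "\<beta> \<in> {\<beta>\<in>monoms n (Suc d). \<beta> 0 \<noteq> 0}"
    hence b: "\<beta> \<in> monoms n (Suc d)" "\<beta> 0 \<noteq> 0" by auto
    define \<alpha> where "\<alpha> = \<beta>(0 := \<beta> 0 - 1)"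
    have "sh \<alpha> = \<beta>" using b(2) unfolding sh_def \<alpha>_def fun_eq_iff by auto
    moreover have "\<alpha> \<in> monoms n d"
    proof -
      have "(\<Sum>i<n. \<alpha> i) = \<alpha> 0 + (\<Sum>i\<in>{1..<n}. \<alpha> i)" using sum_split0[OF n] .
      also have "(\<Sum>i\<in>{1..<n}. \<alpha> i) = (\<Sum>i\<in>{1..<n}. \<beta> i)" unfolding \<alpha>_def by (intro sum.cong) auto
      finally have "(\<Sum>i<n. \<alpha> i) = \<beta> 0 - 1 + (\<Sum>i\<in>{1..<n}. \<beta> i)" unfolding \<alpha>_def by simp
      moreover have "\<beta> 0 + (\<Sum>i\<in>{1..<n}. \<beta> i) = Suc d" using sum_split0[OF n, of \<beta>] b by (simp add: monoms_def)
      ultimately have "(\<Sum>i<n. \<alpha> i) = d" using b(2) by simp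
      thus ?thesis using b n unfolding monoms_def \<alpha>_def by auto
    qed
    ultimately show "\<beta> \<in> sh ` monoms n d" by blast
  qed
  have "((\<lambda>t. G (x(0:=t))) has_field_derivative f (x(0:=t))) (at t)" for x t
  proof -
    have Geq: "(\<lambda>t. G (x(0:=t))) = (\<lambda>t. \<Sum>\<beta>\<in>monoms n (Suc d). c' \<beta> * (t ^ \<beta> 0 * P n \<beta> x))"
      unfolding G_def prod_P[OF n] P_upd by simp
    define h where "h \<beta> = c' \<beta> * (of_nat (\<beta> 0) * (1 * t ^ (\<beta> 0 - Suc 0)) * P n \<beta> x)" for \<beta>
    have D: "((\<lambda>t. \<Sum>\<beta>\<in>monoms n (Suc d). c' \<beta> * (t ^ \<beta> 0 * P n \<beta> x)) has_field_derivative
             (\<Sum>\<beta>\<in>monoms n (Suc d). h \<beta>)) (at t)"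
      unfolding h_def by (intro DERIV_sum DERIV_cmult DERIV_cmult_right DERIV_power[OF DERIV_ident])
    have "(\<Sum>\<beta>\<in>monoms n (Suc d). h \<beta>) = (\<Sum>\<beta>\<in>{\<beta>\<in>monoms n (Suc d). \<beta> 0 \<noteq> 0}. h \<beta>)"
      by (rule sum.mono_neutral_right) (use monoms_finite in \<open>auto simp: h_def\<close>)
    also have "\<dots> = (\<Sum>\<alpha>\<in>monoms n d. h (sh \<alpha>))"
      unfolding img[symmetric] using sum.reindex[OF inj] by (simp add: comp_def)
    also have "\<dots> = (\<Sum>\<alpha>\<in>monoms n d. c \<alpha> * (t ^ \<alpha> 0 * P n \<alpha> x))"
    proof (intro sum.cong refl)
      fix \<alpha> 
      have e: "(sh \<alpha>)(0 := sh \<alpha> 0 - 1) = \<alpha>" unfolding sh_def fun_eq_iff by auto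
      have "P n (sh \<alpha>) x = P n \<alpha> x" unfolding sh_def by (rule P_upd2)
      thus "h (sh \<alpha>) = c \<alpha> * (t ^ \<alpha> 0 * P n \<alpha> x)"
        unfolding h_def c'_def using e by (simp add: sh_def field_simps del: of_nat_Suc)
    qed
    also have "\<dots> = f (x(0:=t))"
      unfolding c prod_P[OF n] P_upd by simp
    finally show ?thesis using D Geq by simp
  qed
  thus ?thesis using G by blast
qed

lemma WR_le:
  assumes n: "n \<ge> 1"
    and D: "\<forall>x t. ((\<lambda>t. G (x(0:=t))) has_field_derivative f (x(0:=t))) (at t)"
  shows "WR n d f \<le> WR n (Suc d) G"
  unfolding WR_def
proof (rule INF_mono)
  fix r assume "r \<in> {r. \<exists>(c :: nat \<Rightarrow> complex) (a :: nat \<Rightarrow> nat \<Rightarrow> complex).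
      \<forall>x. G x = (\<Sum>k<r. c k * (\<Sum>i<n. a k i * x i) ^ Suc d)}"
  then obtain c a where ca: "\<And>x. G x = (\<Sum>k<r. c k * (\<Sum>i<n. a k i * x i) ^ Suc d)" by blast
  define c' where "c' k = c k * (of_nat (Suc d) * a k 0)" for k
  have "f x = (\<Sum>k<r. c' k * (\<Sum>i<n. a k i * x i) ^ d)" for x
  proof -
    define L where "L k t = (\<Sum>i<n. a k i * (x(0:=t)) i)" for k t
    have Lx: "L k (x 0) = (\<Sum>i<n. a k i * x i)" for k unfolding L_def by simp
    have LD: "(L k has_field_derivative a k 0) (at (x 0))" for k
    proof -
      have "L k = (\<lambda>t. a k 0 * t + (\<Sum>i\<in>{1..<n}. a k i * x i))"
        unfolding L_def sum_split0[OF n] by (auto intro!: sum.cong simp: fun_eq_iff)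
      thus ?thesis by (auto intro!: derivative_eq_intros)
    qed
    have G1: "(\<lambda>t. G (x(0:=t))) = (\<lambda>t. \<Sum>k<r. c k * L k t ^ Suc d)"
      unfolding ca L_def by simp
    have D1: "((\<lambda>t. \<Sum>k<r. c k * L k t ^ Suc d) has_field_derivative
        (\<Sum>k<r. c k * (of_nat (Suc d) * (a k 0 * L k (x 0) ^ (Suc d - Suc 0))))) (at (x 0))"
      by (intro DERIV_sum DERIV_cmult DERIV_power LD)
    have D2: "((\<lambda>t. \<Sum>k<r. c k * L k t ^ Suc d) has_field_derivative f x) (at (x 0))"
      using D[rule_format, of x "x 0"] unfolding G1 by simp
    have "f x = (\<Sum>k<r. c k * (of_nat (Suc d) * (a k 0 * L k (x 0) ^ (Suc d - Suc 0))))"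
      using DERIV_unique[OF D2 D1] .
    thus ?thesis unfolding Lx c'_def by (simp add: mult.assoc)
  qed
  hence "r \<in> {r. \<exists>(c :: nat \<Rightarrow> complex) (a :: nat \<Rightarrow> nat \<Rightarrow> complex).
      \<forall>x. f x = (\<Sum>k<r. c k * (\<Sum>i<n. a k i * x i) ^ d)}" by blast
  thus "\<exists>r'\<in>{r. \<exists>(c :: nat \<Rightarrow> complex) (a :: nat \<Rightarrow> nat \<Rightarrow> complex).
      \<forall>x. f x = (\<Sum>k<r. c k * (\<Sum>i<n. a k i * x i) ^ d)}. enat r' \<le> enat r" by blast
qed

lemma maxR_Suc: "n \<ge> 1 \<Longrightarrow> maxR n d \<le> maxR n (Suc d)"
  unfolding maxR_def
proof (rule SUP_least)
  fix f assume n: "n \<ge> 1" and f: "f \<in> forms n d"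
  obtain G where G: "G \<in> forms n (Suc d)"
    and D: "\<forall>x t. ((\<lambda>t. G (x(0:=t))) has_field_derivative f (x(0:=t))) (at t)"
    using antider[OF n f] by blast
  have "WR n d f \<le> WR n (Suc d) G" by (rule WR_le[OF n D])
  also have "\<dots> \<le> (SUP F \<in> forms n (Suc d). WR n (Suc d) F)" using G by (rule SUP_upper)
  finally show "WR n d f \<le> (SUP F \<in> forms n (Suc d). WR n (Suc d) F)" .
qed

theorem proposition12:
  fixes n d1 d2 :: nat
  assumes "n \<ge> 1" and "d1 \<le> d2"
  shows "maxR n d1 \<le> maxR n d2"
  using assms(2)
proof (induction d2 rule: dec_induct)
  case base then show ?case by simp
next
  case (step m) then show ?case using maxR_Suc[OF assms(1), of m] order_trans by blast
qed

end
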